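(* Let $d,K\ge2$, $a^\dagger\in\{1,\dots,K\}$, $\upsilon>0$, $\delta\in(0,1)$, $\xi>0$, $x^\dagger\in\mathbb{R}^d$. For each arm $a$ let $\hat\theta_a\in\mathbb{R}^d$ and $\widetilde V_a\in\mathbb{R}^{d\times d}$ be symmetric positive definite, and for $a\ne a^\dagger$ put $A_a=\widetilde V_a^{-1}+\widetilde V_{a^\dagger}^{-1}$ and $$\mathcal C'_a=\Big\{z\in\mathbb{R}^d:\ \|z-\hat\theta_a\|_{A_a^{-1}}\le \upsilon\,\Phi^{-1}\Big(1-\tfrac{\delta}{K-1}\Big)\Big\}.$$ Then for every $y\in\mathbb{R}^d$ and $a\neq a^\dagger$, the inequality $$\langle x^\dagger+y,\hat\theta_{a^\dagger}-\hat\theta_a\rangle-\xi\ \ge\ \upsilon\,\Phi^{-1}\Big(1-\tfrac{\delta}{K-1}\Big)\,\|x^\dagger+y\|_{\widetilde V_a^{-1}+\widetilde V_{a^\dagger}^{-1}}$$ is equivalent to $\langle x^\dagger+y,\hat\theta_{a^\dagger}\rangle-\xi\ge\max_{z\in\mathcal C'_a}\langle z,x^\dagger+y\rangle$; consequently, the problem of minimizing $\|y\|$ subject to this inequality for all $a\neq a^\dagger$ is feasible if and only if $\hat\theta_{a^\dagger}\notin\mathrm{Conv}\big(\bigcup_{a\neq a^\dagger}\mathcal C'_a\big)$.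
   Context: $\Phi$ is the standard normal cumulative distribution function; $\|x\|_V=\sqrt{x^\top Vx}$; $\mathrm{Conv}$ is the convex hull. This is the relaxed attacker problem against Linear Thompson Sampling (posterior samples $\tilde\theta_a\sim\mathcal N(\hat\theta_a,\upsilon^2\widetilde V_a^{-1})$), i.e. a second-order cone program. (For the equivalence, $\Phi^{-1}(1-\delta/(K-1))\ge0$ is assumed, i.e. $\delta\le (K-1)/2$.) *)

theory Defs
  imports "HOL-Probability.Probability"
begin

definition Phi :: "real \<Rightarrow> real" where
  "Phi = cdf (density lborel std_normal_density)"

definition Phi_inv :: "real \<Rightarrow> real" where
  "Phi_inv p = (THE t. Phi t = p)"

definition wnorm :: "real^'d \<Rightarrow> real^'d^'d \<Rightarrow> real" where
  "wnorm x V = sqrt (x \<bullet> (V *v x))"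

definition sym_posdef :: "real^'d^'d \<Rightarrow> bool" where
  "sym_posdef V \<longleftrightarrow> transpose V = V \<and> (\<forall>x. x \<noteq> 0 \<longrightarrow> x \<bullet> (V *v x) > 0)"

end

theory Submission
  imports Defs
begin



lemma Phi_dist: "real_distribution (density lborel std_normal_density)"
  by (rule real_dist_normal_dist)

lemma null_std: 
  assumes "A \<in> sets borel"
  shows "A \<in> null_sets (density lborel std_normal_density) \<longleftrightarrow> A \<in> null_sets lborel"
proof -
  have "(AE x in lborel. x \<in> A \<longrightarrow> ennreal (std_normal_density x) = 0) \<longleftrightarrow> (AE x in lborel. x \<notin> A)"
    using normal_density_pos[of 1 0] by (intro AE_cong) (auto, metis less_irrefl)
  then show ?thesis using assms
    by (subst null_sets_density_iff) (auto simp: AE_iff_null_sets)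
qed

lemma Phi_cont: "isCont Phi x"
proof -
  interpret N: real_distribution "density lborel std_normal_density" by (rule Phi_dist)
  have "{x} \<in> null_sets (density lborel std_normal_density)"
    by (subst null_std) auto
  then have "measure (density lborel std_normal_density) {x} = 0"
    by (simp add: measure_def null_setsD1)
  then show ?thesis unfolding Phi_def using N.isCont_cdf by blast
qed

lemma Phi_strict: assumes "x < y" shows "Phi x < Phi y"
proof -
  interpret N: real_distribution "density lborel std_normal_density" by (rule Phi_dist)
  have "{x<..y} \<notin> null_sets (density lborel std_normal_density)"
    using assms by (subst null_std) auto
  then have "measure (density lborel std_normal_density) {x<..y} \<noteq> 0"
    using N.emeasure_eq_measure by (auto simp: null_sets_def)
  then have "measure (density lborel std_normal_density) {x<..y} > 0"
    using measure_nonneg less_eq_real_def by metis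
  then show ?thesis unfolding Phi_def using N.cdf_diff_eq[OF assms] by simp
qed




lemma Phi_zero: "Phi 0 = 1/2"
proof -
  interpret N: real_distribution "density lborel std_normal_density" by (rule Phi_dist)
  let ?M = "density lborel std_normal_density"
  have ev: "std_normal_density (-x) = std_normal_density x" for x
    by (simp add: normal_density_def)
  have "emeasure ?M {..0} = (\<integral>\<^sup>+x. ennreal (std_normal_density x) * indicator {..0} x \<partial>lborel)"
    by (simp add: emeasure_density)
  also have "\<dots> = (\<integral>\<^sup>+x. ennreal (std_normal_density x) * indicator {..0} x \<partial>(distr lborel borel uminus))"
    by (simp add: lborel_distr_uminus)
  also have "\<dots> = (\<integral>\<^sup>+x. ennreal (std_normal_density (-x)) * indicator {..0} (-x) \<partial>lborel)"
    by (subst nn_integral_distr) auto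
  also have "\<dots> = (\<integral>\<^sup>+x. ennreal (std_normal_density x) * indicator {0..} x \<partial>lborel)"
    by (intro nn_integral_cong) (auto simp: ev indicator_def)
  also have "\<dots> = emeasure ?M {0..}"
    by (simp add: emeasure_density)
  finally have e: "measure ?M {..0} = measure ?M {0..}"
    by (simp add: measure_def)
  have "measure ?M {0..} = measure ?M ({0} \<union> {0<..})" by (intro arg_cong[where f="measure ?M"]) auto
  also have "\<dots> = measure ?M {0} + measure ?M {0<..}"
    by (rule N.finite_measure_Union) auto
  also have "measure ?M {0} = 0"
  proof -
    have "{0::real} \<in> null_sets ?M" by (subst null_std) auto
    then show ?thesis by (simp add: measure_def null_setsD1)
  qed
  finally have e2: "measure ?M {0..} = measure ?M {0<..}" by simp
  have u: "{..0::real} \<union> {0<..} = UNIV" by auto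
  have "1 = measure ?M ({..0} \<union> {0<..})"
    unfolding u using N.prob_space N.space_eq_univ by simp
  also have "\<dots> = measure ?M {..0} + measure ?M {0<..}"
    by (rule N.finite_measure_Union) auto
  finally show ?thesis using e e2 unfolding Phi_def cdf_def by simp
qed

lemma Phi_inv_nonneg:
  assumes "1/2 \<le> p" "p < 1"
  shows "Phi_inv p \<ge> 0" "Phi (Phi_inv p) = p"
proof -
  interpret N: real_distribution "density lborel std_normal_density" by (rule Phi_dist)
  have top: "(Phi \<longlongrightarrow> 1) at_top" unfolding Phi_def by (rule N.cdf_lim_at_top_prob)
  from order_tendstoD(1)[OF top assms(2)] obtain b where b: "Phi b > p"
    by (auto simp: eventually_at_top_linorder)
  have "0 \<le> b" proof (rule ccontr)
    assume "\<not> 0 \<le> b" then have "Phi b < Phi 0" by (intro Phi_strict) auto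
    then show False using b assms Phi_zero by simp
  qed
  have "\<exists>t\<ge>0. t \<le> b \<and> Phi t = p"
    using IVT[of Phi 0 p b] Phi_zero assms b \<open>0 \<le> b\<close> Phi_cont by (simp add: less_imp_le)
  then obtain t where t: "t \<ge> 0" "Phi t = p" by blast
  have uniq: "s = t" if "Phi s = p" for s
  proof (rule ccontr)
    assume "s \<noteq> t"
    then have "s < t \<or> t < s" by linarith
    then show False using Phi_strict[of s t] Phi_strict[of t s] that t by auto
  qed
  have "Phi_inv p = t" unfolding Phi_inv_def
    using t uniq by (intro the_equality) blast+
  then show "Phi_inv p \<ge> 0" "Phi (Phi_inv p) = p" using t by auto
qed




lemma sym_dot:
  fixes M :: "real^'d^'d"
  assumes "transpose M = M"
  shows "x \<bullet> (M *v y) = y \<bullet> (M *v x)"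
proof -
  have "x \<bullet> (M *v y) = (x v* M) \<bullet> y" by (rule dot_lmul_matrix[symmetric])
  also have "x v* M = transpose M *v x" by (rule transpose_matrix_vector[symmetric])
  also have "\<dots> = M *v x" using assms by simp
  finally show ?thesis by (rule trans[OF _ inner_commute])
qed


lemma posdef_inv:
  fixes A :: "real^'d^'d"
  assumes "sym_posdef A"
  shows "A ** matrix_inv A = mat 1" "matrix_inv A ** A = mat 1"
proof -
  have "\<forall>x. A *v x = 0 \<longrightarrow> x = 0"
    using assms unfolding sym_posdef_def by force
  then have "invertible A" using invertible_left_inverse matrix_left_invertible_ker by blast
  then have "\<exists>A'. A ** A' = mat 1 \<and> A' ** A = mat 1" unfolding invertible_def .
  then have "A ** matrix_inv A = mat 1 \<and> matrix_inv A ** A = mat 1"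
    unfolding matrix_inv_def by (rule someI_ex)
  then show "A ** matrix_inv A = mat 1" "matrix_inv A ** A = mat 1" by auto
qed



lemma inv_sym_posdef:
  fixes A :: "real^'d^'d"
  assumes "sym_posdef A"
  shows "sym_posdef (matrix_inv A)"
proof -
  let ?B = "matrix_inv A"
  note i = posdef_inv[OF assms]
  have tA: "transpose A = A" and pA: "\<And>x. x \<noteq> 0 \<Longrightarrow> x \<bullet> (A *v x) > 0"
    using assms unfolding sym_posdef_def by auto
  have "transpose ?B ** A = mat 1"
  proof -
    have "transpose (A ** ?B) = transpose (mat 1 :: real^'d^'d)" using i(1) by simp
    then show ?thesis by (simp add: matrix_transpose_mul tA transpose_mat)
  qed
  then have "transpose ?B = transpose ?B ** (A ** ?B)" using i(1) by (simp add: matrix_mul_rid)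
  also have "\<dots> = ?B" using \<open>transpose ?B ** A = mat 1\<close> by (simp add: matrix_mul_assoc matrix_mul_lid)
  finally have tB: "transpose ?B = ?B" .
  have "x \<bullet> (?B *v x) > 0" if "x \<noteq> 0" for x
  proof -
    define u where "u = ?B *v x"
    have xu: "x = A *v u" unfolding u_def using i(1) by (simp add: matrix_vector_mul_assoc)
    have "u \<noteq> 0" using that xu by auto
    then have "u \<bullet> (A *v u) > 0" by (rule pA)
    moreover have "x \<bullet> (?B *v x) = u \<bullet> (A *v u)"
      by (subst (1) xu, fold u_def, rule inner_commute)
    ultimately show ?thesis by simp
  qed
  then show ?thesis using tB unfolding sym_posdef_def by auto
qed



lemma add_sym_posdef:
  fixes A B :: "real^'d^'d"
  assumes "sym_posdef A" "sym_posdef B"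
  shows "sym_posdef (A + B)"
proof -
  have "transpose (A + B) = transpose A + transpose B"
    by (simp add: transpose_def vec_eq_iff)
  moreover have "x \<bullet> ((A + B) *v x) = x \<bullet> (A *v x) + x \<bullet> (B *v x)" for x
    by (simp add: matrix_vector_mult_add_rdistrib inner_add_right)
  ultimately show ?thesis using assms unfolding sym_posdef_def by (auto intro: add_pos_pos)
qed



lemma posdef_CS:
  fixes B :: "real^'d^'d"
  assumes "sym_posdef B"
  shows "(u \<bullet> (B *v v))^2 \<le> (u \<bullet> (B *v u)) * (v \<bullet> (B *v v))"
proof (cases "v = 0")
  case True then show ?thesis by simp
next
  case False
  have tB: "transpose B = B" and pB: "\<And>x. x \<noteq> 0 \<Longrightarrow> x \<bullet> (B *v x) > 0"
    using assms unfolding sym_posdef_def by auto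
  have nn: "x \<bullet> (B *v x) \<ge> 0" for x using pB[of x] by (cases "x = 0") auto
  define a where "a = v \<bullet> (B *v v)"
  define b where "b = u \<bullet> (B *v v)"
  define c where "c = u \<bullet> (B *v u)"
  have a: "a > 0" unfolding a_def using pB False by auto
  have sym: "v \<bullet> (B *v u) = b" unfolding b_def using sym_dot[OF tB] by metis
  define t where "t = - b / a"
  have "0 \<le> (u + t *\<^sub>R v) \<bullet> (B *v (u + t *\<^sub>R v))" by (rule nn)
  also have "\<dots> = c + 2 * t * b + t^2 * a"
    unfolding a_def c_def using sym
    unfolding a_def c_def using sym b_def[symmetric]
    by (simp add: matrix_vector_right_distrib matrix_vector_mult_scaleR
        inner_add_left inner_add_right power2_eq_square algebra_simps)
  also have "\<dots> = c - b^2 / a" unfolding t_def using a by (simp add: field_simps power2_eq_square)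
  finally have "b^2 / a \<le> c" by simp
  then have "b^2 \<le> c * a" using a by (simp add: field_simps)
  then show ?thesis unfolding a_def b_def c_def .
qed





lemma posdef_nn: "sym_posdef B \<Longrightarrow> x \<bullet> (B *v x) \<ge> 0"
  unfolding sym_posdef_def by (cases "x = 0") (auto intro: less_imp_le)

lemma ellipsoid_le:
  fixes A :: "real^'d^'d"
  assumes A: "sym_posdef A" and r: "r \<ge> 0" and z: "wnorm (z - th) (matrix_inv A) \<le> r"
  shows "z \<bullet> w \<le> th \<bullet> w + r * wnorm w A"
proof -
  let ?B = "matrix_inv A"
  have B: "sym_posdef ?B" by (rule inv_sym_posdef[OF A])
  define u where "u = z - th"
  define v where "v = A *v w"
  have wv: "?B *v v = w" unfolding v_def using posdef_inv(2)[OF A] by (simp add: matrix_vector_mul_assoc)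
  have cs: "(u \<bullet> (?B *v v))^2 \<le> (u \<bullet> (?B *v u)) * (v \<bullet> (?B *v v))" by (rule posdef_CS[OF B])
  have "v \<bullet> (?B *v v) = w \<bullet> (A *v w)" unfolding wv unfolding v_def by (rule inner_commute)
  with cs wv have cs2: "(u \<bullet> w)^2 \<le> (u \<bullet> (?B *v u)) * (w \<bullet> (A *v w))" by simp
  have n1: "u \<bullet> (?B *v u) \<ge> 0" by (rule posdef_nn[OF B])
  have n2: "w \<bullet> (A *v w) \<ge> 0" by (rule posdef_nn[OF A])
  have "u \<bullet> w \<le> sqrt ((u \<bullet> (?B *v u)) * (w \<bullet> (A *v w)))" by (rule real_le_rsqrt[OF cs2])
  also have "\<dots> = wnorm u ?B * wnorm w A" unfolding wnorm_def by (simp add: real_sqrt_mult)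
  also have "\<dots> \<le> r * wnorm w A"
    using z unfolding u_def by (intro mult_right_mono) (auto simp: wnorm_def n2)
  finally have "u \<bullet> w \<le> r * wnorm w A" .
  moreover have "z \<bullet> w = th \<bullet> w + u \<bullet> w" unfolding u_def by (simp add: inner_diff_left)
  ultimately show ?thesis by simp
qed

lemma ellipsoid_attain:
  fixes A :: "real^'d^'d"
  assumes A: "sym_posdef A" and r: "r \<ge> 0"
  shows "\<exists>z. wnorm (z - th) (matrix_inv A) \<le> r \<and> z \<bullet> w = th \<bullet> w + r * wnorm w A"
proof (cases "wnorm w A = 0")
  case True
  then show ?thesis using r by (intro exI[of _ th]) (simp add: wnorm_def)
next
  case False
  let ?B = "matrix_inv A"
  define s where "s = wnorm w A"
  have n2: "w \<bullet> (A *v w) \<ge> 0" by (rule posdef_nn[OF A])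
  have s2: "s^2 = w \<bullet> (A *v w)" unfolding s_def wnorm_def using n2 by simp
  have sp: "s > 0" using False n2 unfolding s_def wnorm_def by simp
  define v where "v = A *v w"
  have wv: "?B *v v = w" unfolding v_def using posdef_inv(2)[OF A] by (simp add: matrix_vector_mul_assoc)
  have vw: "v \<bullet> w = s^2" unfolding s2 v_def by (rule inner_commute)
  define z where "z = th + (r / s) *\<^sub>R v"
  have "(z - th) \<bullet> (?B *v (z - th)) = (r/s)^2 * (v \<bullet> (?B *v v))"
    unfolding z_def by (simp add: matrix_vector_mult_scaleR power2_eq_square)
  also have "\<dots> = r^2" unfolding wv vw using sp by (simp add: field_simps)
  finally have "wnorm (z - th) ?B = r" unfolding wnorm_def using r by simp
  moreover have "z \<bullet> w = th \<bullet> w + r * s"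
    unfolding z_def using sp by (simp add: inner_add_left vw power2_eq_square)
  ultimately show ?thesis unfolding s_def by auto
qed




lemma ellipsoid_compact:
  fixes A :: "real^'d^'d"
  assumes A: "sym_posdef A" and r: "r \<ge> 0"
  shows "compact {z. wnorm (z - th) (matrix_inv A) \<le> r}"
proof -
  let ?E = "{z. wnorm (z - th) (matrix_inv A) \<le> r}"
  have "continuous_on UNIV (\<lambda>z. wnorm (z - th) (matrix_inv A))"
    unfolding wnorm_def by (intro continuous_intros bounded_linear.continuous_on[OF matrix_vector_mul_bounded_linear])
  then have cl: "closed ?E"
    by (rule closed_Collect_le) (rule continuous_on_const)
  define bd where "bd i = \<bar>th $ i\<bar> + r * (wnorm (axis i 1) A + wnorm (- axis i 1) A)" for i
  have wn: "wnorm v A \<ge> 0" for v unfolding wnorm_def using posdef_nn[OF A] by simp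
  have comp: "\<bar>z $ i\<bar> \<le> bd i" if z: "z \<in> ?E" for z i
  proof -
    have "z \<bullet> axis i 1 \<le> th \<bullet> axis i 1 + r * wnorm (axis i 1) A"
      using z by (intro ellipsoid_le[OF A r]) auto
    moreover have "z \<bullet> (- axis i 1) \<le> th \<bullet> (- axis i 1) + r * wnorm (- axis i 1) A"
      using z by (intro ellipsoid_le[OF A r]) auto
    moreover have "r * wnorm (axis i 1) A \<ge> 0" "r * wnorm (- axis i 1) A \<ge> 0"
      using wn r by simp_all
    ultimately show ?thesis unfolding bd_def cart_eq_inner_axis
      using abs_ge_self[of "th \<bullet> axis i 1"] abs_ge_minus_self[of "th \<bullet> axis i 1"]
      by (simp add: inner_minus_right abs_le_iff distrib_left; linarith)
  qed
  have "\<forall>z\<in>?E. norm z \<le> (\<Sum>i\<in>UNIV. bd i)"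
  proof
    fix z assume "z \<in> ?E"
    have "norm z \<le> (\<Sum>i\<in>UNIV. \<bar>z $ i\<bar>)" by (rule norm_le_l1_cart)
    also have "\<dots> \<le> (\<Sum>i\<in>UNIV. bd i)" using comp[OF \<open>z \<in> ?E\<close>] by (intro sum_mono) auto
    finally show "norm z \<le> (\<Sum>i\<in>UNIV. bd i)" .
  qed
  then have "bounded ?E" unfolding bounded_iff by blast
  with cl show ?thesis by (simp add: compact_eq_bounded_closed)
qed




theorem mainTheorem3:
  fixes K :: nat and adag :: nat and ups delta xi :: real
    and xdag :: "real^'d"
    and theta :: "nat \<Rightarrow> real^'d"
    and V :: "nat \<Rightarrow> real^'d^'d"
    and C :: "nat \<Rightarrow> (real^'d) set"
  assumes hd: "CARD('d) \<ge> 2" and hK: "K \<ge> 2"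
    and hadag: "adag \<in> {1..K}"
    and hups: "ups > 0"
    and hdelta: "0 < delta" "delta < 1"
    and hdelta2: "delta \<le> (real K - 1) / 2"
    and hxi: "xi > 0"
    and hV: "\<forall>a\<in>{1..K}. sym_posdef (V a)"
    and hC: "\<forall>a\<in>{1..K} - {adag}. C a =
      {z. wnorm (z - theta a) (matrix_inv (matrix_inv (V a) + matrix_inv (V adag)))
          \<le> ups * Phi_inv (1 - delta / (real K - 1))}"
  shows "(\<forall>y :: real^'d. \<forall>a\<in>{1..K} - {adag}.
            ((xdag + y) \<bullet> (theta adag - theta a) - xi
               \<ge> ups * Phi_inv (1 - delta / (real K - 1))
                 * wnorm (xdag + y) (matrix_inv (V a) + matrix_inv (V adag)))
            \<longleftrightarrow> ((xdag + y) \<bullet> theta adag - xi \<ge> (SUP z\<in>C a. z \<bullet> (xdag + y))))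
       \<and> ((\<exists>y :: real^'d. \<forall>a\<in>{1..K} - {adag}.
            (xdag + y) \<bullet> (theta adag - theta a) - xi
               \<ge> ups * Phi_inv (1 - delta / (real K - 1))
                 * wnorm (xdag + y) (matrix_inv (V a) + matrix_inv (V adag)))
          \<longleftrightarrow> theta adag \<notin> convex hull (\<Union>a\<in>{1..K} - {adag}. C a))"
proof -
  define I where "I = {1..K} - {adag}"
  define p where "p = 1 - delta / (real K - 1)"
  define r where "r = ups * Phi_inv p"
  define Aa where "Aa a = matrix_inv (V a) + matrix_inv (V adag)" for a
  have Kpos: "real K - 1 \<ge> 1" using hK by simp
  have p1: "1/2 \<le> p" unfolding p_def using hdelta2 Kpos by (simp add: field_simps)
  have p2: "p < 1" unfolding p_def using hdelta Kpos by simp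
  have r0: "r \<ge> 0" unfolding r_def using Phi_inv_nonneg(1)[OF p1 p2] hups by simp
  have Apd: "sym_posdef (Aa a)" if "a \<in> I" for a
    unfolding Aa_def using that hadag hV I_def
    by (intro add_sym_posdef inv_sym_posdef) auto
  have Ceq: "C a = {z. wnorm (z - theta a) (matrix_inv (Aa a)) \<le> r}" if "a \<in> I" for a
    using hC that unfolding I_def Aa_def r_def p_def by auto
  have ub: "z \<bullet> w \<le> theta a \<bullet> w + r * wnorm w (Aa a)" if "a \<in> I" "z \<in> C a" for a z w
    using ellipsoid_le[OF Apd[OF that(1)] r0] that Ceq by auto
  have att: "\<exists>z\<in>C a. z \<bullet> w = theta a \<bullet> w + r * wnorm w (Aa a)" if "a \<in> I" for a w
    using ellipsoid_attain[OF Apd[OF that] r0, of "theta a" w] Ceq[OF that] by auto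
  have sup: "(SUP z\<in>C a. z \<bullet> w) = theta a \<bullet> w + r * wnorm w (Aa a)" if aI: "a \<in> I" for a w
  proof -
    obtain z0 where "z0 \<in> C a" "z0 \<bullet> w = theta a \<bullet> w + r * wnorm w (Aa a)" using att[OF aI] by blast
    then show ?thesis using ub[OF aI]
      by (intro cSup_eq_maximum) (auto, metis image_eqI)
  qed
  have key: "(w \<bullet> (theta adag - theta a) - xi \<ge> r * wnorm w (Aa a))
     \<longleftrightarrow> (w \<bullet> theta adag - xi \<ge> theta a \<bullet> w + r * wnorm w (Aa a))" for w a
    by (simp add: inner_diff_right inner_commute algebra_simps)
  have key2: "(w \<bullet> (theta adag - theta a) - xi \<ge> r * wnorm w (Aa a))
     \<longleftrightarrow> (\<forall>z\<in>C a. z \<bullet> w \<le> w \<bullet> theta adag - xi)" if aI: "a \<in> I" for w a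
  proof
    assume "w \<bullet> (theta adag - theta a) - xi \<ge> r * wnorm w (Aa a)"
    show "\<forall>z\<in>C a. z \<bullet> w \<le> w \<bullet> theta adag - xi"
    proof
      fix z assume "z \<in> C a"
      have "theta a \<bullet> w + r * wnorm w (Aa a) \<le> w \<bullet> theta adag - xi"
        using key \<open>w \<bullet> (theta adag - theta a) - xi \<ge> r * wnorm w (Aa a)\<close> by blast
      then show "z \<bullet> w \<le> w \<bullet> theta adag - xi" using ub[OF aI \<open>z \<in> C a\<close>, of w] by linarith
    qed
  next
    assume "\<forall>z\<in>C a. z \<bullet> w \<le> w \<bullet> theta adag - xi"
    then show "w \<bullet> (theta adag - theta a) - xi \<ge> r * wnorm w (Aa a)"
    proof -
      obtain z where "z \<in> C a" "z \<bullet> w = theta a \<bullet> w + r * wnorm w (Aa a)" using att[OF aI, of w] by blast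
      then have "theta a \<bullet> w + r * wnorm w (Aa a) \<le> w \<bullet> theta adag - xi"
        using \<open>\<forall>z\<in>C a. z \<bullet> w \<le> w \<bullet> theta adag - xi\<close> by fastforce
      then show ?thesis using key by blast
    qed
  qed
  have part1: "\<forall>y :: real^'d. \<forall>a\<in>{1..K} - {adag}.
            ((xdag + y) \<bullet> (theta adag - theta a) - xi
               \<ge> ups * Phi_inv (1 - delta / (real K - 1))
                 * wnorm (xdag + y) (matrix_inv (V a) + matrix_inv (V adag)))
            \<longleftrightarrow> ((xdag + y) \<bullet> theta adag - xi \<ge> (SUP z\<in>C a. z \<bullet> (xdag + y)))"
  proof (intro allI ballI)
    fix y :: "real^'d" and a assume a: "a \<in> {1..K} - {adag}"
    then have aI: "a \<in> I" unfolding I_def .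
    show "((xdag + y) \<bullet> (theta adag - theta a) - xi
               \<ge> ups * Phi_inv (1 - delta / (real K - 1))
                 * wnorm (xdag + y) (matrix_inv (V a) + matrix_inv (V adag)))
            \<longleftrightarrow> ((xdag + y) \<bullet> theta adag - xi \<ge> (SUP z\<in>C a. z \<bullet> (xdag + y)))"
      using key[of "xdag + y" a] sup[OF aI, of "xdag + y"] unfolding r_def p_def Aa_def by simp
  qed
  let ?U = "\<Union>a\<in>{1..K} - {adag}. C a"
  have part2: "(\<exists>w :: real^'d. \<forall>a\<in>I. w \<bullet> (theta adag - theta a) - xi \<ge> r * wnorm w (Aa a))
      \<longleftrightarrow> theta adag \<notin> convex hull ?U"
  proof
    assume "\<exists>w :: real^'d. \<forall>a\<in>I. w \<bullet> (theta adag - theta a) - xi \<ge> r * wnorm w (Aa a)"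
    then obtain w :: "real^'d" where w: "\<forall>a\<in>I. \<forall>z\<in>C a. z \<bullet> w \<le> w \<bullet> theta adag - xi"
      using key2 by blast
    have "?U \<subseteq> {z. w \<bullet> z \<le> w \<bullet> theta adag - xi}"
      using w unfolding I_def by (auto simp: inner_commute)
    then have "convex hull ?U \<subseteq> {z. w \<bullet> z \<le> w \<bullet> theta adag - xi}"
      by (rule hull_minimal) (rule convex_halfspace_le)
    then show "theta adag \<notin> convex hull ?U" using hxi by auto
  next
    assume nin: "theta adag \<notin> convex hull ?U"
    have "compact ?U"
      using ellipsoid_compact[OF Apd r0] Ceq unfolding I_def by (intro compact_UN) auto
    then have "compact (convex hull ?U)" by (rule compact_convex_hull)
    then obtain c b where cb: "c \<bullet> theta adag < b" "\<forall>x\<in>convex hull ?U. c \<bullet> x > b"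
      using separating_hyperplane_closed_point[OF convex_convex_hull compact_imp_closed nin] by blast
    define k where "k = xi / (b - c \<bullet> theta adag)"
    have kp: "k > 0" unfolding k_def using cb hxi by simp
    define w where "w = - k *\<^sub>R c"
    have "\<forall>z\<in>C a. z \<bullet> w \<le> w \<bullet> theta adag - xi" if "a \<in> I" for a
    proof
      fix z assume "z \<in> C a"
      then have "z \<in> ?U" using that unfolding I_def by blast
      then have "z \<in> convex hull ?U" by (rule hull_inc)
      then have "c \<bullet> z > b" using cb by auto
      then have "k * (c \<bullet> z) \<ge> k * b" using kp by simp
      moreover have "k * (b - c \<bullet> theta adag) = xi" unfolding k_def using cb by simp
      ultimately show "z \<bullet> w \<le> w \<bullet> theta adag - xi"
        unfolding w_def by (simp add: inner_commute algebra_simps)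
    qed
    then show "\<exists>w :: real^'d. \<forall>a\<in>I. w \<bullet> (theta adag - theta a) - xi \<ge> r * wnorm w (Aa a)"
      using key2 by blast
  qed
  have ex: "(\<exists>y :: real^'d. \<forall>a\<in>{1..K} - {adag}.
            (xdag + y) \<bullet> (theta adag - theta a) - xi
               \<ge> ups * Phi_inv (1 - delta / (real K - 1))
                 * wnorm (xdag + y) (matrix_inv (V a) + matrix_inv (V adag)))
      \<longleftrightarrow> (\<exists>w :: real^'d. \<forall>a\<in>I. w \<bullet> (theta adag - theta a) - xi \<ge> r * wnorm w (Aa a))"
    unfolding I_def r_def p_def Aa_def
  proof
    assume "\<exists>y :: real^'d. \<forall>a\<in>{1..K} - {adag}.
            (xdag + y) \<bullet> (theta adag - theta a) - xi
               \<ge> ups * Phi_inv (1 - delta / (real K - 1))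
                 * wnorm (xdag + y) (matrix_inv (V a) + matrix_inv (V adag))"
    then show "\<exists>w :: real^'d. \<forall>a\<in>{1..K} - {adag}. w \<bullet> (theta adag - theta a) - xi
        \<ge> ups * Phi_inv (1 - delta / (real K - 1)) * wnorm w (matrix_inv (V a) + matrix_inv (V adag))"
      by blast
  next
    assume "\<exists>w :: real^'d. \<forall>a\<in>{1..K} - {adag}. w \<bullet> (theta adag - theta a) - xi
        \<ge> ups * Phi_inv (1 - delta / (real K - 1)) * wnorm w (matrix_inv (V a) + matrix_inv (V adag))"
    then obtain w :: "real^'d" where "\<forall>a\<in>{1..K} - {adag}. w \<bullet> (theta adag - theta a) - xi
        \<ge> ups * Phi_inv (1 - delta / (real K - 1)) * wnorm w (matrix_inv (V a) + matrix_inv (V adag))" by blast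
    then show "\<exists>y :: real^'d. \<forall>a\<in>{1..K} - {adag}.
            (xdag + y) \<bullet> (theta adag - theta a) - xi
               \<ge> ups * Phi_inv (1 - delta / (real K - 1))
                 * wnorm (xdag + y) (matrix_inv (V a) + matrix_inv (V adag))"
      by (intro exI[of _ "w - xdag"]) simp
  qed
  show ?thesis using part1 part2 ex by blast
qed


end
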